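(* Assume $S^t(\mu,\nu)>0$ and let $X$ be $F^t$ conditioned on $F^t_{t+1}=r$. Then $D(X\,\|\,F^t)=D(X\,\|\,B^t)=-\log S^t(\mu,\nu)$.
   Context: $\Omega$ is a finite set, $S$ a symmetric substochastic matrix on $\Omega$ with nonnegative entries, $u,v$ nonnegative vectors on $\Omega$ with $\|u\|_2=\|v\|_2=1$, $\mu=u/\|u\|_1$, $\nu=v/\|v\|_1$, $t$ a positive integer, $S^t(\mu,\nu)=\sum_{x,y}\mu(x)S^t(x,y)\nu(y)$. Let $\Omega_\circ=\Omega\cup\{r\}$, $r\notin\Omega$, fix $z_0\in\Omega$. $F^t$ is the sub-probability measure on $\Omega_\circ^{\{-1,\ldots,t+1\}}$ with $\Pr[F^t=w]=\mu(w_0)\prod_{i=1}^tS(w_{i-1},w_i)\,c(w)$ for $w_{-1}=r$, $w_0,\ldots,w_t\in\Omega$, where $c(w)=\nu(w_t)$ if $w_{t+1}=r$, $c(w)=1-\nu(w_t)$ if $w_{t+1}=z_0$, and 0 otherwise. $B^t$ has $\Pr[B^t=w]=\nu(w_t)\prod_{i=1}^tS(w_i,w_{i-1})\,c'(w)$ for $w_{t+1}=r$, $w_0,\ldots,w_t\in\Omega$, with $c'(w)=\mu(w_0)$ if $w_{-1}=r$, $c'(w)=1-\mu(w_0)$ if $w_{-1}=z_0$, and 0 otherwise. $X$ has $\Pr[X=w]=\Pr[F^t=w]/S^t(\mu,\nu)$ for $w_{t+1}=r$. For nonnegative functions $p,q$ on a countable set, $D(p\|q)=\sum_x p(x)\log\frac{p(x)}{q(x)}$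 (terms with $p(x)=0$ are 0; log base 2); for random variables, $D(X\|Y)$ is the divergence of their distribution functions. *)

theory Defs
  imports "HOL-Analysis.Analysis" "HOL-Library.FuncSet"
begin

(* Walks w_{-1},...,w_{t+1} are represented as extensional functions int => 'a on {-1..t+1}. *)

definition normalize1 :: "'a set \<Rightarrow> ('a \<Rightarrow> real) \<Rightarrow> 'a \<Rightarrow> real" where
  "normalize1 Om u x = u x / (\<Sum>y\<in>Om. \<bar>u y\<bar>)"

fun matpow :: "'a set \<Rightarrow> ('a \<Rightarrow> 'a \<Rightarrow> real) \<Rightarrow> nat \<Rightarrow> 'a \<Rightarrow> 'a \<Rightarrow> real" where
  "matpow Om S 0 x y = (if x = y then 1 else 0)"
| "matpow Om S (Suc n) x y = (\<Sum>z\<in>Om. matpow Om S n x z * S z y)"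

definition bilin :: "'a set \<Rightarrow> ('a \<Rightarrow> 'a \<Rightarrow> real) \<Rightarrow> nat \<Rightarrow> ('a \<Rightarrow> real) \<Rightarrow> ('a \<Rightarrow> real) \<Rightarrow> real" where
  "bilin Om S t mu nu = (\<Sum>x\<in>Om. \<Sum>y\<in>Om. mu x * matpow Om S t x y * nu y)"

definition walks :: "'a set \<Rightarrow> 'a \<Rightarrow> nat \<Rightarrow> (int \<Rightarrow> 'a) set" where
  "walks Om r t = PiE {-1..int t + 1} (\<lambda>_. insert r Om)"

definition Fwalk :: "'a set \<Rightarrow> ('a \<Rightarrow> 'a \<Rightarrow> real) \<Rightarrow> ('a \<Rightarrow> real) \<Rightarrow> ('a \<Rightarrow> real)
    \<Rightarrow> 'a \<Rightarrow> 'a \<Rightarrow> nat \<Rightarrow> (int \<Rightarrow> 'a) \<Rightarrow> real" where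
  "Fwalk Om S mu nu r z0 t w =
     (if w (-1) = r \<and> (\<forall>i\<in>{0..int t}. w i \<in> Om) then
        mu (w 0) * (\<Prod>i\<in>{1..int t}. S (w (i - 1)) (w i)) *
        (if w (int t + 1) = r then nu (w (int t))
         else if w (int t + 1) = z0 then 1 - nu (w (int t)) else 0)
      else 0)"

definition Bwalk :: "'a set \<Rightarrow> ('a \<Rightarrow> 'a \<Rightarrow> real) \<Rightarrow> ('a \<Rightarrow> real) \<Rightarrow> ('a \<Rightarrow> real)
    \<Rightarrow> 'a \<Rightarrow> 'a \<Rightarrow> nat \<Rightarrow> (int \<Rightarrow> 'a) \<Rightarrow> real" where
  "Bwalk Om S mu nu r z0 t w =
     (if w (int t + 1) = r \<and> (\<forall>i\<in>{0..int t}. w i \<in> Om) then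
        nu (w (int t)) * (\<Prod>i\<in>{1..int t}. S (w i) (w (i - 1))) *
        (if w (-1) = r then mu (w 0)
         else if w (-1) = z0 then 1 - mu (w 0) else 0)
      else 0)"

definition Xwalk :: "'a set \<Rightarrow> ('a \<Rightarrow> 'a \<Rightarrow> real) \<Rightarrow> ('a \<Rightarrow> real) \<Rightarrow> ('a \<Rightarrow> real)
    \<Rightarrow> 'a \<Rightarrow> 'a \<Rightarrow> nat \<Rightarrow> (int \<Rightarrow> 'a) \<Rightarrow> real" where
  "Xwalk Om S mu nu r z0 t w =
     (if w (int t + 1) = r then Fwalk Om S mu nu r z0 t w / bilin Om S t mu nu else 0)"

definition KLdiv :: "'b set \<Rightarrow> ('b \<Rightarrow> real) \<Rightarrow> ('b \<Rightarrow> real) \<Rightarrow> real" where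
  "KLdiv A p q = (\<Sum>x\<in>A. if p x = 0 then 0 else p x * log 2 (p x / q x))"

end

theory Submission imports Defs begin

lemma sum_PiE_insert:
  assumes "a \<notin> A" "finite A" "finite (T a)"
  shows "(\<Sum>w\<in>PiE (insert a A) T. f w) = (\<Sum>y\<in>T a. \<Sum>g\<in>PiE A T. f (g(a:=y)))"
proof -
  have "(\<Sum>w\<in>PiE (insert a A) T. f w) = (\<Sum>p\<in>T a \<times> PiE A T. f ((\<lambda>(y, g). g(a := y)) p))"
    unfolding PiE_insert_eq by (subst sum.reindex[OF inj_combinator[OF assms(1)]]) (simp add: o_def)
  also have "\<dots> = (\<Sum>y\<in>T a. \<Sum>g\<in>PiE A T. f (g(a:=y)))"
    unfolding sum.cartesian_product by (simp add: case_prod_unfold)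
  finally show ?thesis .
qed

lemma prod_step:
  "(\<Prod>i\<in>{1..1 + int n}. S ((w(1 + int n := y)) (i-1)) ((w(1 + int n := y)) i))
   = S (w (int n)) y * (\<Prod>i\<in>{1..int n}. S (w (i-1)) (w i))"
proof -
  have e2: "{1..1 + int n} = insert (1 + int n) {1..int n}" by auto
  show ?thesis unfolding e2 by (subst prod.insert) (auto intro!: prod.cong)
qed

lemma prod_step2:
  "(\<Prod>i\<in>{1..1 + int n}. S (w (i-1)) (if i = 1 + int n then y else w i))
   = S (w (int n)) y * (\<Prod>i\<in>{1..int n}. S (w (i-1)) (w i))"
proof -
  have e2: "{1..1 + int n} = insert (1 + int n) {1..int n}" by auto
  show ?thesis unfolding e2 by (subst prod.insert) simp_all
qed

lemma path_sum:
  assumes "finite Om"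
  shows "(\<Sum>w\<in>PiE {0..int n} (\<lambda>_. Om). mu (w 0) * (\<Prod>i\<in>{1..int n}. S (w (i-1)) (w i)) * g (w (int n)))
     = (\<Sum>x\<in>Om. \<Sum>y\<in>Om. mu x * matpow Om S n x y * g y)"
proof (induction n arbitrary: g)
  case 0
  have e: "{0..int 0} = insert 0 {}" by auto
  have d: "(\<Sum>y\<in>Om. mu x * (if x = y then 1 else 0) * g y) = mu x * g x" if "x \<in> Om" for x
  proof -
    have "(\<Sum>y\<in>Om. mu x * (if x = y then 1 else 0) * g y) = (\<Sum>y\<in>Om. if x = y then mu x * g y else 0)"
      by (intro sum.cong) auto
    then show ?thesis using that assms by simp
  qed
  show ?case unfolding e
    by (subst sum_PiE_insert) (simp_all add: assms d)
next
  case (Suc n)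
  have e: "{0..int (Suc n)} = insert (1 + int n) {0..int n}" by auto
  have "(\<Sum>w\<in>PiE {0..int (Suc n)} (\<lambda>_. Om). mu (w 0) * (\<Prod>i\<in>{1..int (Suc n)}. S (w (i-1)) (w i)) * g (w (int (Suc n))))
    = (\<Sum>y\<in>Om. \<Sum>w\<in>PiE {0..int n} (\<lambda>_. Om). mu (w 0) * (\<Prod>i\<in>{1..int n}. S (w (i-1)) (w i)) * (S (w (int n)) y * g y))"
    unfolding e
    apply (subst sum_PiE_insert)
       apply (simp_all add: assms)
    apply (intro sum.cong refl)
    subgoal for y w
      apply (simp only: prod_step2[of S w n y])
      by (simp only: ac_simps)
    done
  also have "\<dots> = (\<Sum>w\<in>PiE {0..int n} (\<lambda>_. Om). mu (w 0) * (\<Prod>i\<in>{1..int n}. S (w (i-1)) (w i)) * (\<Sum>y\<in>Om. S (w (int n)) y * g y))"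
    by (subst sum.swap) (simp add: sum_distrib_left)
  also have "\<dots> = (\<Sum>x\<in>Om. \<Sum>z\<in>Om. mu x * matpow Om S n x z * (\<Sum>y\<in>Om. S z y * g y))"
    by (rule Suc.IH)
  also have "\<dots> = (\<Sum>x\<in>Om. \<Sum>y\<in>Om. mu x * matpow Om S (Suc n) x y * g y)"
  proof (rule sum.cong[OF refl])
    fix x
    have "(\<Sum>z\<in>Om. mu x * matpow Om S n x z * (\<Sum>y\<in>Om. S z y * g y))
        = (\<Sum>z\<in>Om. \<Sum>y\<in>Om. mu x * matpow Om S n x z * S z y * g y)"
      by (simp add: sum_distrib_left mult.assoc)
    also have "\<dots> = (\<Sum>y\<in>Om. \<Sum>z\<in>Om. mu x * matpow Om S n x z * S z y * g y)"
      by (rule sum.swap)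
    also have "\<dots> = (\<Sum>y\<in>Om. mu x * matpow Om S (Suc n) x y * g y)"
      by (simp add: sum_distrib_left sum_distrib_right mult.assoc)
    finally show "(\<Sum>z\<in>Om. mu x * matpow Om S n x z * (\<Sum>y\<in>Om. S z y * g y))
        = (\<Sum>y\<in>Om. mu x * matpow Om S (Suc n) x y * g y)" .
  qed
  finally show ?case .
qed

theorem lemma3p3:
  fixes Om :: "'a set" and S :: "'a \<Rightarrow> 'a \<Rightarrow> real" and u v :: "'a \<Rightarrow> real"
    and r z0 :: 'a and t :: nat
  assumes "finite Om" and "r \<notin> Om" and "z0 \<in> Om"
    and "\<And>x y. x \<in> Om \<Longrightarrow> y \<in> Om \<Longrightarrow> S x y \<ge> 0"
    and "\<And>x y. x \<in> Om \<Longrightarrow> y \<in> Om \<Longrightarrow> S x y = S y x"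
    and "\<And>x. x \<in> Om \<Longrightarrow> (\<Sum>y\<in>Om. S x y) \<le> 1"
    and "\<And>x. x \<in> Om \<Longrightarrow> u x \<ge> 0" and "\<And>x. x \<in> Om \<Longrightarrow> v x \<ge> 0"
    and "sqrt (\<Sum>x\<in>Om. (u x)^2) = 1" and "sqrt (\<Sum>x\<in>Om. (v x)^2) = 1"
    and "t > 0"
    and "bilin Om S t (normalize1 Om u) (normalize1 Om v) > 0"
  shows "KLdiv (walks Om r t) (Xwalk Om S (normalize1 Om u) (normalize1 Om v) r z0 t)
             (Fwalk Om S (normalize1 Om u) (normalize1 Om v) r z0 t)
           = - log 2 (bilin Om S t (normalize1 Om u) (normalize1 Om v))
         \<and> KLdiv (walks Om r t) (Xwalk Om S (normalize1 Om u) (normalize1 Om v) r z0 t)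
             (Bwalk Om S (normalize1 Om u) (normalize1 Om v) r z0 t)
           = - log 2 (bilin Om S t (normalize1 Om u) (normalize1 Om v))"
proof -
  note fin = assms(1)
  define mu where "mu = normalize1 Om u"
  define nu where "nu = normalize1 Om v"
  define b where "b = bilin Om S t mu nu"
  define F where "F = Fwalk Om S mu nu r z0 t"
  define B where "B = Bwalk Om S mu nu r z0 t"
  define X where "X = Xwalk Om S mu nu r z0 t"
  have bpos: "b > 0" using assms(12) unfolding b_def mu_def nu_def .
  have rz: "r \<noteq> z0" using assms(2,3) by auto
  have Xinfo: "w (int t + 1) = r \<and> w (-1) = r \<and> (\<forall>i\<in>{0..int t}. w i \<in> Om) \<and> F w \<noteq> 0 \<and> X w = F w / b"
    if "X w \<noteq> 0" for w
  proof -
    have a: "w (int t + 1) = r" using that unfolding X_def Xwalk_def by (auto split: if_splits)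
    then have XF: "X w = F w / b" unfolding X_def Xwalk_def F_def b_def by simp
    then have "F w \<noteq> 0" using that by auto
    then have "w (-1) = r \<and> (\<forall>i\<in>{0..int t}. w i \<in> Om)"
      unfolding F_def Fwalk_def by (auto split: if_splits)
    then show ?thesis using a XF \<open>F w \<noteq> 0\<close> by blast
  qed
  have XB: "B w = F w" if "X w \<noteq> 0" for w
  proof -
    from Xinfo[OF that] have h: "w (int t + 1) = r" "w (-1) = r" "\<forall>i\<in>{0..int t}. w i \<in> Om" by auto
    have "(\<Prod>i\<in>{1..int t}. S (w i) (w (i - 1))) = (\<Prod>i\<in>{1..int t}. S (w (i - 1)) (w i))"
    proof (rule prod.cong[OF refl])
      fix i assume "i \<in> {1..int t}"
      then have "w i \<in> Om" "w (i - 1) \<in> Om" using h(3) by auto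
      then show "S (w i) (w (i - 1)) = S (w (i - 1)) (w i)" using assms(5) by blast
    qed
    then show ?thesis using h unfolding B_def Bwalk_def F_def Fwalk_def by (simp add: ac_simps)
  qed
  define P where "P = PiE {0..int t} (\<lambda>_. Om)"
  define ext where "ext = (\<lambda>w'::int \<Rightarrow> 'a. \<lambda>i. if i = -1 \<or> i = int t + 1 then r else w' i)"
  have finW: "finite (walks Om r t)" unfolding walks_def using fin by (simp add: finite_PiE)
  have sub: "ext ` P \<subseteq> walks Om r t"
    unfolding walks_def P_def ext_def using assms(2) by (auto simp: PiE_iff extensional_def)
  have zero: "X w = 0" if "w \<in> walks Om r t - ext ` P" for w
  proof (rule ccontr)
    assume "X w \<noteq> 0"
    from Xinfo[OF this] have h: "w (int t + 1) = r" "w (-1) = r" "\<forall>i\<in>{0..int t}. w i \<in> Om" by auto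
    have wW: "w \<in> walks Om r t" using that by auto
    have "w = ext (restrict w {0..int t})"
    proof
      fix i show "w i = ext (restrict w {0..int t}) i"
        using h wW unfolding ext_def walks_def by (auto simp: PiE_iff extensional_def)
    qed
    moreover have "restrict w {0..int t} \<in> P" unfolding P_def using h by auto
    ultimately show False using that by auto
  qed
  have inj: "inj_on ext P"
  proof
    fix a c assume a: "a \<in> P" and c: "c \<in> P" and e: "ext a = ext c"
    show "a = c"
    proof
      fix i
      show "a i = c i"
      proof (cases "i \<in> {0..int t}")
        case True
        then have "ext a i = a i" "ext c i = c i" unfolding ext_def by auto
        then show ?thesis using e by simp
      next
        case False
        then show ?thesis using a c unfolding P_def by (auto simp: PiE_iff extensional_def)
      qed
    qed
  qed
  have Xext: "X (ext w') = mu (w' 0) * (\<Prod>i\<in>{1..int t}. S (w' (i-1)) (w' i)) * nu (w' (int t)) / b"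
    if "w' \<in> P" for w'
  proof -
    have inOm: "\<forall>i\<in>{0..int t}. ext w' i \<in> Om" using that unfolding P_def ext_def by auto
    have e: "ext w' i = w' i" if "i \<in> {0..int t}" for i using that unfolding ext_def by auto
    have pr: "(\<Prod>i\<in>{1..int t}. S (ext w' (i-1)) (ext w' i)) = (\<Prod>i\<in>{1..int t}. S (w' (i-1)) (w' i))"
      by (rule prod.cong[OF refl]) (simp add: e)
    have "ext w' (-1) = r" "ext w' (int t + 1) = r" unfolding ext_def by auto
    then show ?thesis using inOm pr e[of 0] e[of "int t"]
      unfolding X_def Xwalk_def Fwalk_def b_def by simp
  qed
  have sumX: "(\<Sum>w\<in>walks Om r t. X w) = 1"
  proof -
    have "(\<Sum>w\<in>walks Om r t. X w) = (\<Sum>w\<in>ext ` P. X w)"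
      by (rule sum.mono_neutral_right[OF finW sub]) (use zero in blast)
    also have "\<dots> = (\<Sum>w'\<in>P. X (ext w'))" by (rule sum.reindex_cong[OF inj refl refl])
    also have "\<dots> = (\<Sum>w'\<in>P. mu (w' 0) * (\<Prod>i\<in>{1..int t}. S (w' (i-1)) (w' i)) * nu (w' (int t))) / b"
      by (simp add: Xext sum_divide_distrib)
    also have "\<dots> = b / b" unfolding P_def path_sum[OF fin] b_def bilin_def by simp
    also have "\<dots> = 1" using bpos by simp
    finally show ?thesis .
  qed
  have KL: "KLdiv (walks Om r t) X Q = - log 2 b" if hQ: "\<And>w. X w \<noteq> 0 \<Longrightarrow> Q w = F w" for Q
  proof -
    have "KLdiv (walks Om r t) X Q = (\<Sum>w\<in>walks Om r t. X w * (- log 2 b))"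
      unfolding KLdiv_def
    proof (rule sum.cong[OF refl])
      fix w
      show "(if X w = 0 then 0 else X w * log 2 (X w / Q w)) = X w * (- log 2 b)"
      proof (cases "X w = 0")
        case False
        with Xinfo[OF False] hQ[OF False] have "X w / Q w = inverse b"
          using bpos by (simp add: field_simps)
        then show ?thesis using False by (simp add: log_inverse)
      qed simp
    qed
    also have "\<dots> = - log 2 b" by (simp only: sum_distrib_right[symmetric] sumX)
    finally show ?thesis .
  qed
  have "KLdiv (walks Om r t) X F = - log 2 b" by (rule KL) simp
  moreover have "KLdiv (walks Om r t) X B = - log 2 b" by (rule KL) (rule XB)
  ultimately show ?thesis unfolding X_def F_def B_def b_def mu_def nu_def by simp
qed

end
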